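(* Let $\varepsilon\in\{1,-1\}$ and put $\epsilon_i=1$ for $i\in\{1,\dots,N\}\setminus\{n+1,n+2\}$ and $\epsilon_{n+1}=\epsilon_{n+2}=\varepsilon$. Then the following four difference operators are equal: \[ \overrightarrow{\prod_{a=1}^n}\bigl(1-z_{\bar a}(u)D\bigr)\cdot\bigl(1-z_{\bar n}(u)z_n(u+1)D^2\bigr)\cdot\overleftarrow{\prod_{a=1}^n}\bigl(1-z_a(u)D\bigr) \] \[ =\overrightarrow{\prod_{a=1}^n}\bigl(z_a(u+n+1-a)-D\bigr)\cdot\bigl(z_{\bar n}(u-1)z_n(u)-D^2\bigr)\cdot\overleftarrow{\prod_{a=1}^n}\bigl(z_{\bar a}(u-n-2+a)-D\bigr) \] \[ =\overleftarrow{\prod_{i=1}^N}\bigl(1-\epsilon_ix_i(u)D\bigr)=-\overrightarrow{\prod_{i=1}^N}\bigl(\epsilon_ix_i(u+n+1-i)-D\bigr). \] In particular $L(u)$ is a polynomial of degree $N$ in $D$ whose coefficients lie in $\mathcal Y$.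
   Context: Fix an integer $n\ge 2$ and put $N=2n+2$. Let $Q_a(u)$ ($1\le a\le n$, $u\in\mathbb C$) be algebraically independent commuting indeterminates, $\mathcal Q=\mathbb Z[Q_a(u)^{\pm1}]_{1\le a\le n,\,u\in\mathbb C}$, and $\mathcal K$ its field of fractions. Put $d_a=1+\delta_{an}$, $Y_a(u)=Q_a(u-\frac{d_a}{2})/Q_a(u+\frac{d_a}{2})$ for $1\le a\le n$, $Y_0(u)=1$, and $\mathcal Y=\mathbb Z[Y_a(u)^{\pm1}]_{1\le a\le n,\,u\in\mathbb C}\subset\mathcal Q$. Let $J=\{1\prec2\prec\cdots\prec n\prec\bar n\prec\cdots\prec\bar2\prec\bar1\}$. For $1\le a\le n$ set $z_a(u)=\frac{Y_a(u+\frac a2)}{Y_{a-1}(u+\frac{a+1}2)}$, $z_{\bar a}(u)=\frac{Y_{a-1}(u+\frac{2n-a+3}2)}{Y_a(u+\frac{2n-a+4}2)}$; set $x_a(u)=z_a(u)$, $x_{2n+3-a}(u)=z_{\bar a}(u)$ for $1\le a\le n$, and $x_{n+1}(u)=-x_{n+2}(u)=\frac{Q_n(u+\frac n2)Q_n(u+\frac{n+4}2)}{Q_n(u+\frac{n+2}2)^2}$. $D$ is the shift operator: difference operators are expressions $\sum_j c_j(u)D^j$ with $c_j(u)\in\mathcal K$, multiplied using $D\,c(u)=c(u+1)\,D$. Write $\overrightarrow{\prod}_{i=1}^kX_i=X_1X_2\cdots X_k$ and $\overleftarrow{\prod}_{i=1}^kX_i=X_k\cdots X_2X_1$. Define $L(u)=\overrightarrow{\prod}_{i=1}^{N}\bigl(x_i(u+n+1-i)-D\bigr)$.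 *)

theory Defs
  imports Complex_Main
begin

text \<open>An operator is represented by its coefficient sequence: A j u is the coefficient
  c_j(u) of D^j.  Multiplication uses D c(u) = c(u+1) D.\<close>

type_synonym 'k dop = "nat \<Rightarrow> complex \<Rightarrow> 'k"

definition dop_mult :: "'k::field dop \<Rightarrow> 'k dop \<Rightarrow> 'k dop" where
  "dop_mult A B = (\<lambda>m u. \<Sum>i\<le>m. A i u * B (m - i) (u + of_nat i))"

definition dop_const :: "(complex \<Rightarrow> 'k::field) \<Rightarrow> 'k dop" where
  "dop_const c = (\<lambda>j u. if j = 0 then c u else 0)"

definition dop_one :: "'k::field dop" where
  "dop_one = dop_const (\<lambda>_. 1)"

definition dop_D :: "'k::field dop" where
  "dop_D = (\<lambda>j u. if j = 1 then 1 else 0)"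

definition dop_minus :: "'k::field dop \<Rightarrow> 'k dop \<Rightarrow> 'k dop" where
  "dop_minus A B = (\<lambda>j u. A j u - B j u)"

definition dop_neg :: "'k::field dop \<Rightarrow> 'k dop" where
  "dop_neg A = (\<lambda>j u. - A j u)"

definition dop_prod :: "'k::field dop list \<Rightarrow> 'k dop" where
  "dop_prod Xs = foldr dop_mult Xs dop_one"

text \<open>overrightarrow prod_{i=1}^k X_i = X_1 ... X_k, overleftarrow = X_k ... X_1\<close>
definition rprod :: "nat \<Rightarrow> (nat \<Rightarrow> 'k::field dop) \<Rightarrow> 'k dop" where
  "rprod k X = dop_prod (map X [1..<k+1])"

definition lprod :: "nat \<Rightarrow> (nat \<Rightarrow> 'k::field dop) \<Rightarrow> 'k dop" where
  "lprod k X = dop_prod (rev (map X [1..<k+1]))"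

definition dd :: "nat \<Rightarrow> nat \<Rightarrow> complex" where
  "dd n a = (if a = n then 2 else 1)"

definition Yv :: "nat \<Rightarrow> (nat \<Rightarrow> complex \<Rightarrow> 'k::field) \<Rightarrow> nat \<Rightarrow> complex \<Rightarrow> 'k" where
  "Yv n Q a u = (if a = 0 then 1 else Q a (u - dd n a / 2) / Q a (u + dd n a / 2))"

definition zv :: "nat \<Rightarrow> (nat \<Rightarrow> complex \<Rightarrow> 'k::field) \<Rightarrow> nat \<Rightarrow> complex \<Rightarrow> 'k" where
  "zv n Q a u = Yv n Q a (u + of_nat a / 2) / Yv n Q (a - 1) (u + (of_nat a + 1) / 2)"

definition zbar :: "nat \<Rightarrow> (nat \<Rightarrow> complex \<Rightarrow> 'k::field) \<Rightarrow> nat \<Rightarrow> complex \<Rightarrow> 'k" where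
  "zbar n Q a u = Yv n Q (a - 1) (u + (2 * of_nat n - of_nat a + 3) / 2)
                  / Yv n Q a (u + (2 * of_nat n - of_nat a + 4) / 2)"

definition xmid :: "nat \<Rightarrow> (nat \<Rightarrow> complex \<Rightarrow> 'k::field) \<Rightarrow> complex \<Rightarrow> 'k" where
  "xmid n Q u = Q n (u + of_nat n / 2) * Q n (u + (of_nat n + 4) / 2)
                / (Q n (u + (of_nat n + 2) / 2))^2"

definition xv :: "nat \<Rightarrow> (nat \<Rightarrow> complex \<Rightarrow> 'k::field) \<Rightarrow> nat \<Rightarrow> complex \<Rightarrow> 'k" where
  "xv n Q i u = (if i \<le> n then zv n Q i u
                 else if i = n + 1 then xmid n Q u
                 else if i = n + 2 then - xmid n Q u
                 else zbar n Q (2 * n + 3 - i) u)"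

definition epsv :: "nat \<Rightarrow> int \<Rightarrow> nat \<Rightarrow> 'k::field" where
  "epsv n \<epsilon> i = (if i = n + 1 \<or> i = n + 2 then of_int \<epsilon> else 1)"

definition Lop :: "nat \<Rightarrow> (nat \<Rightarrow> complex \<Rightarrow> 'k::field) \<Rightarrow> 'k dop" where
  "Lop n Q = rprod (2 * n + 2)
     (\<lambda>i. dop_minus (dop_const (\<lambda>u. xv n Q i (u + of_nat n + 1 - of_nat i))) dop_D)"

text \<open>Formal elements of the ring Y = Z[Y_a(u)^{+-1}], 1 <= a <= n.\<close>
datatype yexpr = YAtom nat complex | YInv nat complex | YConst int
  | YAdd yexpr yexpr | YMul yexpr yexpr

fun yeval :: "nat \<Rightarrow> (nat \<Rightarrow> complex \<Rightarrow> 'k::field) \<Rightarrow> yexpr \<Rightarrow> 'k" where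
  "yeval n Q (YAtom a u) = (if 1 \<le> a \<and> a \<le> n then Yv n Q a u else 1)"
| "yeval n Q (YInv a u) = (if 1 \<le> a \<and> a \<le> n then inverse (Yv n Q a u) else 1)"
| "yeval n Q (YConst k) = of_int k"
| "yeval n Q (YAdd e f) = yeval n Q e + yeval n Q f"
| "yeval n Q (YMul e f) = yeval n Q e * yeval n Q f"

definition admissible :: "nat \<Rightarrow> (nat \<Rightarrow> complex \<Rightarrow> 'k::field) \<Rightarrow> bool" where
  "admissible n Q = (\<forall>a u. 1 \<le> a \<and> a \<le> n \<longrightarrow> Q a u \<noteq> 0)"

end

theory Submission
  imports Defs
begin


lemma dop_mult_assoc: "dop_mult (dop_mult A B) C = dop_mult A (dop_mult B C)"
proof (intro ext)
  fix m u
  define g where "g = (\<lambda>j k. A j u * B k (u + of_nat j) * C (m - j - k) (u + of_nat j + of_nat k))"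
  have "dop_mult (dop_mult A B) C m u = (\<Sum>i\<le>m. \<Sum>j\<le>i. g j (i - j))"
    unfolding dop_mult_def g_def sum_distrib_right
    by (intro sum.cong refl) (simp add: mult.assoc of_nat_diff)
  also have "\<dots> = (\<Sum>(j,k)\<in>{(j,k). j+k \<le> m}. g j k)"
    by (rule sum.triangle_reindex_eq[symmetric])
  also have "{(j,k). j+k \<le> m} = Sigma {..m} (\<lambda>j. {..m-j})" by auto
  also have "(\<Sum>(j,k)\<in>Sigma {..m} (\<lambda>j. {..m-j}). g j k) = (\<Sum>j\<le>m. \<Sum>k\<le>m-j. g j k)"
    by (rule sum.Sigma[symmetric]) auto
  also have "\<dots> = dop_mult A (dop_mult B C) m u"
    unfolding dop_mult_def g_def sum_distrib_left
    by (intro sum.cong refl) (simp add: mult.assoc add.assoc diff_diff_add)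
  finally show "dop_mult (dop_mult A B) C m u = dop_mult A (dop_mult B C) m u" .
qed



lemma dop_mult_const_left: "dop_mult (dop_const f) A = (\<lambda>j u. f u * A j u)"
proof (intro ext)
  fix j u
  have "dop_mult (dop_const f) A j u = (\<Sum>i\<le>j. if i = 0 then f u * A j u else 0)"
    unfolding dop_mult_def dop_const_def by (intro sum.cong refl) auto
  then show "dop_mult (dop_const f) A j u = f u * A j u" by simp
qed

lemma dop_mult_const_right: "dop_mult A (dop_const f) = (\<lambda>j u. A j u * f (u + of_nat j))"
proof (intro ext)
  fix j u
  have "dop_mult A (dop_const f) j u = (\<Sum>i\<le>j. if i = j then A j u * f (u + of_nat j) else 0)"
    unfolding dop_mult_def dop_const_def by (intro sum.cong refl) auto
  then show "dop_mult A (dop_const f) j u = A j u * f (u + of_nat j)" by simp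
qed

lemma dop_mult_D_right: "dop_mult A dop_D = (\<lambda>j u. if j = 0 then 0 else A (j - 1) u)"
proof (intro ext)
  fix j u
  have "dop_mult A dop_D j u = (\<Sum>i\<le>j. if i = j - 1 \<and> j \<noteq> 0 then A (j - 1) u else 0)"
    unfolding dop_mult_def dop_D_def by (intro sum.cong refl) auto
  then show "dop_mult A dop_D j u = (if j = 0 then 0 else A (j - 1) u)" by simp
qed

lemma dop_mult_D_left: "dop_mult dop_D A = (\<lambda>j u. if j = 0 then 0 else A (j - 1) (u + 1))"
proof (intro ext)
  fix j u
  have "dop_mult dop_D A j u = (\<Sum>i\<le>j. if i = 1 \<and> j \<noteq> 0 then A (j - 1) (u + 1) else 0)"
    unfolding dop_mult_def dop_D_def by (intro sum.cong refl) auto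
  then show "dop_mult dop_D A j u = (if j = 0 then 0 else A (j - 1) (u + 1))" by simp
qed

lemma dop_one_left[simp]: "dop_mult dop_one A = A"
  unfolding dop_one_def dop_mult_const_left by simp

lemma dop_one_right[simp]: "dop_mult A dop_one = A"
  unfolding dop_one_def dop_mult_const_right by simp

lemma dop_prod_append: "dop_prod (xs @ ys) = dop_mult (dop_prod xs) (dop_prod ys)"
  by (induction xs) (simp_all add: dop_prod_def dop_mult_assoc)

lemma dop_prod_Cons: "dop_prod (x # xs) = dop_mult x (dop_prod xs)"
  by (simp add: dop_prod_def)

lemma dop_prod_Nil: "dop_prod [] = dop_one"
  by (simp add: dop_prod_def)

lemma DD: "dop_mult dop_D dop_D = (\<lambda>j u. if j = 2 then 1 else 0)"
  unfolding dop_mult_D_right by (auto simp: dop_D_def intro!: ext)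

lemma lin1: "dop_minus dop_one (dop_mult (dop_const c) dop_D) = (\<lambda>j u. if j = 0 then 1 else if j = 1 then - c u else 0)"
  unfolding dop_mult_const_left by (auto simp: dop_minus_def dop_one_def dop_const_def dop_D_def intro!: ext)

lemma lin2: "dop_minus (dop_const c) dop_D = (\<lambda>j u. if j = 0 then c u else if j = 1 then - 1 else 0)"
  by (auto simp: dop_minus_def dop_const_def dop_D_def intro!: ext)

lemma quad1: "dop_minus dop_one (dop_mult (dop_const c) (dop_mult dop_D dop_D)) = (\<lambda>j u. if j = 0 then 1 else if j = 2 then - c u else 0)"
  unfolding dop_mult_const_left DD by (auto simp: dop_minus_def dop_one_def dop_const_def intro!: ext)

lemma quad2: "dop_minus (dop_const c) (dop_mult dop_D dop_D) = (\<lambda>j u. if j = 0 then c u else if j = 2 then - 1 else 0)"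
  unfolding DD by (auto simp: dop_minus_def dop_const_def intro!: ext)

lemma neg_mult_left: "dop_mult (dop_neg A) B = dop_neg (dop_mult A B)"
  by (auto simp: dop_neg_def dop_mult_def sum_negf intro!: ext)
lemma neg_mult_right: "dop_mult A (dop_neg B) = dop_neg (dop_mult A B)"
  by (auto simp: dop_neg_def dop_mult_def sum_negf intro!: ext)
lemma neg_neg: "dop_neg (dop_neg A) = A"
  by (auto simp: dop_neg_def)



definition Ff :: "nat \<Rightarrow> (nat \<Rightarrow> complex \<Rightarrow> 'k::field) \<Rightarrow> nat \<Rightarrow> 'k dop" where
  "Ff n Q k = dop_const (\<lambda>u. Yv n Q k (u + of_nat n + 1 - of_nat k / 2))"
definition Gf :: "nat \<Rightarrow> (nat \<Rightarrow> complex \<Rightarrow> 'k::field) \<Rightarrow> nat \<Rightarrow> 'k dop" where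
  "Gf n Q k = dop_const (\<lambda>u. inverse (Yv n Q k (u + of_nat k / 2)))"

lemma Yv_nz: "admissible n Q \<Longrightarrow> a \<le> n \<Longrightarrow> Yv n Q a u \<noteq> 0"
  by (auto simp: Yv_def admissible_def)

lemma L1:
  assumes "admissible n Q" "k < n"
  shows "dop_mult (dop_minus dop_one (dop_mult (dop_const (\<lambda>u. zbar n Q (Suc k) u)) dop_D)) (Ff n Q (Suc k))
       = dop_mult (Ff n Q k) (dop_minus (dop_const (\<lambda>u. zv n Q (Suc k) (u + of_nat n + 1 - of_nat (Suc k)))) dop_D)"
proof -
  have nz1: "Yv n Q k x \<noteq> 0" for x using assms Yv_nz[of n Q] by simp
  have nz2: "Yv n Q (Suc k) x \<noteq> 0" for x using assms Yv_nz[of n Q] by simp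
  show ?thesis
    unfolding Ff_def lin1 lin2 unfolding dop_mult_const_right dop_mult_const_left
    using nz1 nz2
    by (auto simp: zv_def zbar_def field_simps intro!: ext)
qed

lemma L2:
  assumes "admissible n Q" "k < n"
  shows "dop_mult (Gf n Q (Suc k)) (dop_minus dop_one (dop_mult (dop_const (\<lambda>u. zv n Q (Suc k) u)) dop_D))
       = dop_mult (dop_minus (dop_const (\<lambda>u. zbar n Q (Suc k) (u - of_nat n - 2 + of_nat (Suc k)))) dop_D) (Gf n Q k)"
proof -
  have nz1: "Yv n Q k x \<noteq> 0" for x using assms Yv_nz[of n Q] by simp
  have nz2: "Yv n Q (Suc k) x \<noteq> 0" for x using assms Yv_nz[of n Q] by simp
  show ?thesis
    unfolding Gf_def lin1 lin2 unfolding dop_mult_const_right dop_mult_const_left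
    using nz1 nz2
    by (auto simp: zv_def zbar_def field_simps intro!: ext)
qed

lemma Lbase:
  assumes "admissible n Q" "1 \<le> n"
  shows "dop_minus dop_one (dop_mult (dop_const (\<lambda>u. zbar n Q n u * zv n Q n (u + 1))) (dop_mult dop_D dop_D))
    = dop_mult (dop_mult (Ff n Q n) (dop_minus (dop_const (\<lambda>u. zbar n Q n (u - 1) * zv n Q n u)) (dop_mult dop_D dop_D))) (Gf n Q n)"
proof -
  have nz1: "Yv n Q (n - 1) x \<noteq> 0" for x using assms Yv_nz[of n Q] by simp
  have nz2: "Yv n Q n x \<noteq> 0" for x using assms Yv_nz[of n Q] by simp
  show ?thesis
    unfolding Gf_def Ff_def quad1 quad2 unfolding dop_mult_const_right dop_mult_const_left
    using nz1 nz2
    by (auto simp: zv_def zbar_def field_simps intro!: ext)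
qed

definition AA :: "nat \<Rightarrow> (nat \<Rightarrow> complex \<Rightarrow> 'k::field) \<Rightarrow> nat \<Rightarrow> 'k dop" where
  "AA n Q k = dop_prod (map (\<lambda>a. dop_minus dop_one (dop_mult (dop_const (\<lambda>u. zbar n Q a u)) dop_D)) [Suc k..<Suc n]
      @ dop_minus dop_one (dop_mult (dop_const (\<lambda>u. zbar n Q n u * zv n Q n (u + 1))) (dop_mult dop_D dop_D))
      # rev (map (\<lambda>a. dop_minus dop_one (dop_mult (dop_const (\<lambda>u. zv n Q a u)) dop_D)) [Suc k..<Suc n]))"

definition BB :: "nat \<Rightarrow> (nat \<Rightarrow> complex \<Rightarrow> 'k::field) \<Rightarrow> nat \<Rightarrow> 'k dop" where
  "BB n Q k = dop_prod (map (\<lambda>a. dop_minus (dop_const (\<lambda>u. zv n Q a (u + of_nat n + 1 - of_nat a))) dop_D) [Suc k..<Suc n]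
      @ dop_minus (dop_const (\<lambda>u. zbar n Q n (u - 1) * zv n Q n u)) (dop_mult dop_D dop_D)
      # rev (map (\<lambda>a. dop_minus (dop_const (\<lambda>u. zbar n Q a (u - of_nat n - 2 + of_nat a))) dop_D) [Suc k..<Suc n]))"

lemma AB:
  assumes "admissible n Q" "1 \<le> n" "k \<le> n"
  shows "AA n Q k = dop_mult (dop_mult (Ff n Q k) (BB n Q k)) (Gf n Q k)"
  using assms(3)
proof (induction k rule: inc_induct)
  case base
  then show ?case using Lbase[OF assms(1,2)]
    by (simp add: AA_def BB_def dop_prod_Cons dop_prod_Nil)
next
  case (step k)
  let ?ZB = "dop_minus dop_one (dop_mult (dop_const (\<lambda>u. zbar n Q (Suc k) u)) dop_D)"
  let ?Z = "dop_minus dop_one (dop_mult (dop_const (\<lambda>u. zv n Q (Suc k) u)) dop_D)"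
  let ?Z2 = "dop_minus (dop_const (\<lambda>u. zv n Q (Suc k) (u + of_nat n + 1 - of_nat (Suc k)))) dop_D"
  let ?ZB2 = "dop_minus (dop_const (\<lambda>u. zbar n Q (Suc k) (u - of_nat n - 2 + of_nat (Suc k)))) dop_D"
  have up: "[Suc k..<Suc n] = Suc k # [Suc (Suc k)..<Suc n]"
    using step.hyps by (simp add: upt_conv_Cons)
  have eA: "AA n Q k = dop_mult ?ZB (dop_mult (AA n Q (Suc k)) ?Z)"
    unfolding AA_def up
    by (simp add: dop_prod_Cons dop_prod_append dop_prod_Nil dop_mult_assoc)
  have eB: "BB n Q k = dop_mult ?Z2 (dop_mult (BB n Q (Suc k)) ?ZB2)"
    unfolding BB_def up
    by (simp add: dop_prod_Cons dop_prod_append dop_prod_Nil dop_mult_assoc)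
  have l1: "dop_mult ?ZB (Ff n Q (Suc k)) = dop_mult (Ff n Q k) ?Z2"
    using L1[OF assms(1)] step.hyps by simp
  have l2: "dop_mult (Gf n Q (Suc k)) ?Z = dop_mult ?ZB2 (Gf n Q k)"
    using L2[OF assms(1)] step.hyps by simp
  have "AA n Q k = dop_mult (dop_mult ?ZB (Ff n Q (Suc k))) (dop_mult (BB n Q (Suc k)) (dop_mult (Gf n Q (Suc k)) ?Z))"
    unfolding eA step.IH by (simp add: dop_mult_assoc)
  also have "\<dots> = dop_mult (dop_mult (Ff n Q k) ?Z2) (dop_mult (BB n Q (Suc k)) (dop_mult ?ZB2 (Gf n Q k)))"
    unfolding l1 l2 ..
  also have "\<dots> = dop_mult (dop_mult (Ff n Q k) (BB n Q k)) (Gf n Q k)"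
    unfolding eB by (simp add: dop_mult_assoc)
  finally show ?case .
qed



lemma mm:
  assumes "admissible n Q" "2 \<le> n"
  shows "xmid n Q u * xmid n Q (u + 1) = zbar n Q n u * zv n Q n (u + 1)"
proof -
  have nz: "Q n x \<noteq> 0" for x using assms unfolding admissible_def by simp
  have nz1: "Q (n - 1) x \<noteq> 0" for x using assms unfolding admissible_def by simp
  show ?thesis using nz nz1 assms(2)
    by (simp add: xmid_def zbar_def zv_def Yv_def dd_def field_simps power2_eq_square)
qed

lemma deg1_mult:
  assumes "\<And>j u. j \<ge> 2 \<Longrightarrow> A j u = 0" "\<And>j u. j \<ge> 2 \<Longrightarrow> B j u = 0"
  shows "dop_mult A B = (\<lambda>j u. if j = 0 then A 0 u * B 0 u
     else if j = 1 then A 0 u * B 1 u + A 1 u * B 0 (u + 1)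
     else if j = 2 then A 1 u * B 1 (u + 1) else 0)"
proof (intro ext)
  fix j u
  show "dop_mult A B j u = (if j = 0 then A 0 u * B 0 u
     else if j = 1 then A 0 u * B 1 u + A 1 u * B 0 (u + 1)
     else if j = 2 then A 1 u * B 1 (u + 1) else 0)"
  proof (cases "j \<le> 2")
    case True
    then have "j = 0 \<or> j = 1 \<or> j = 2" by auto
    then show ?thesis
      by (auto simp: dop_mult_def atMost_Suc numeral_2_eq_2 assms)
  next
    case False
    have "dop_mult A B j u = (\<Sum>i\<le>j. 0)"
      unfolding dop_mult_def
    proof (intro sum.cong refl)
      fix i assume "i \<in> {..j}"
      show "A i u * B (j - i) (u + of_nat i) = 0"
        using False assms by (cases "i \<ge> 2") auto
    qed
    then show ?thesis using False by simp
  qed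
qed

lemma upt_split: "[1..<2*n+2+1] = [1..<n+1] @ [n+1, n+2] @ [n+3..<2*n+2+1]"
proof -
  have e: "2*n+2+1 = (n+1)+(n+2)" by simp
  have "[1..<2*n+2+1] = [1..<n+1] @ [n+1..<2*n+2+1]"
    unfolding e by (rule upt_add_eq_append) simp
  also have "[n+1..<2*n+2+1] = [n+1, n+2] @ [n+3..<2*n+2+1]"
  proof -
    have a: "[n+1..<2*n+2+1] = (n+1) # [Suc (n+1)..<2*n+2+1]" by (rule upt_conv_Cons) simp
    have b: "[Suc (n+1)..<2*n+2+1] = Suc (n+1) # [Suc (Suc (n+1))..<2*n+2+1]" by (rule upt_conv_Cons) simp
    have c: "Suc (n+1) = n+2" "Suc (n+2) = n+3" by simp_all
    show ?thesis unfolding a unfolding b unfolding c by (simp only: append_Cons append_Nil)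
  qed
  finally show ?thesis .
qed

lemma refl_map: "map f [n+3..<2*n+2+1] = rev (map (\<lambda>a. f (2*n+3-a)) [1..<n+1])"
proof (rule nth_equalityI)
  have l: "length [n+3..<2*n+2+1] = n" by (simp del: upt_Suc)
  show "length (map f [n+3..<2*n+2+1]) = length (rev (map (\<lambda>a. f (2*n+3-a)) [1..<n+1]))" by (simp add: l del: upt_Suc)
  fix i assume "i < length (map f [n+3..<2*n+2+1])"
  then have i: "i < n" using l by simp
  have "2*n+3 - (1 + (n - Suc i)) = n + 3 + i" using i by simp
  then show "map f [n+3..<2*n+2+1] ! i = rev (map (\<lambda>a. f (2*n+3-a)) [1..<n+1]) ! i"
    using i l by (simp add: rev_nth nth_upt add.assoc del: upt_Suc)
qed

lemma prod_mid: "dop_prod (l1 @ [a, b] @ l3) = dop_prod (l1 @ dop_mult a b # l3)"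
  by (simp add: dop_prod_append dop_prod_Cons dop_mult_assoc)

lemma eps_sq: "\<epsilon> = 1 \<or> \<epsilon> = -1 \<Longrightarrow> (of_int \<epsilon> :: 'k::field) * of_int \<epsilon> = 1"
  by auto

lemma op3_eq:
  fixes Q :: "nat \<Rightarrow> complex \<Rightarrow> 'k::field"
  assumes "admissible n Q" "2 \<le> n" "\<epsilon> = 1 \<or> \<epsilon> = -1"
  shows "lprod (2*n+2) (\<lambda>i. dop_minus dop_one (dop_mult (dop_const (\<lambda>u. epsv n \<epsilon> i * xv n Q i u)) dop_D))
    = AA n Q 0"
proof -
  define X where "X = (\<lambda>i. dop_minus dop_one (dop_mult (dop_const (\<lambda>u. epsv n \<epsilon> i * xv n Q i u)) dop_D) :: 'k dop)"
  define ZB where "ZB = (\<lambda>a. dop_minus dop_one (dop_mult (dop_const (\<lambda>u. zbar n Q a u)) dop_D) :: 'k dop)"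
  define Z where "Z = (\<lambda>a. dop_minus dop_one (dop_mult (dop_const (\<lambda>u. zv n Q a u)) dop_D) :: 'k dop)"
  define M where "M = (dop_minus dop_one (dop_mult (dop_const (\<lambda>u. zbar n Q n u * zv n Q n (u + 1))) (dop_mult dop_D dop_D)) :: 'k dop)"
  have m1: "map X [1..<n+1] = map Z [1..<n+1]"
    by (rule map_cong) (auto simp: X_def Z_def xv_def epsv_def)
  have m3: "map X [n+3..<2*n+2+1] = rev (map ZB [1..<n+1])"
    unfolding refl_map
  proof (rule arg_cong[where f=rev], rule map_cong)
    fix a assume "a \<in> set [1..<n+1]"
    then have a: "1 \<le> a" "a \<le> n" by auto
    then have "\<not> 2*n+3-a \<le> n" "2*n+3-a \<noteq> n+1" "2*n+3-a \<noteq> n+2" "2*n+3-(2*n+3-a) = a" by auto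
    then show "X (2*n+3-a) = ZB a" by (simp add: X_def ZB_def xv_def epsv_def)
  qed simp
  have e2: "(of_int \<epsilon> :: 'k) * of_int \<epsilon> = 1" using eps_sq[OF assms(3)] .
  have ee: "of_int \<epsilon> * a * (of_int \<epsilon> * b) = a * b" for a b :: 'k
    using e2 by (metis mult.assoc mult.left_commute mult_1)
  have mid: "dop_mult (X (n+2)) (X (n+1)) = M"
    unfolding X_def M_def lin1 quad1
    apply (subst deg1_mult)
      apply simp
     apply simp
    apply (intro ext)
    apply (simp add: xv_def epsv_def ee mm[OF assms(1,2)])
    done
  have "lprod (2*n+2) X = dop_prod (rev (map X [n+3..<2*n+2+1]) @ [X (n+2), X (n+1)] @ rev (map X [1..<n+1]))"
    unfolding lprod_def upt_split by simp
  also have "\<dots> = dop_prod (map ZB [1..<n+1] @ M # rev (map Z [1..<n+1]))"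
    unfolding prod_mid mid m1 m3 by simp
  also have "\<dots> = AA n Q 0"
    unfolding AA_def ZB_def M_def Z_def by simp
  finally show ?thesis unfolding X_def .
qed

lemma neg_mid: "dop_neg (dop_prod (l1 @ a # l3)) = dop_prod (l1 @ dop_neg a # l3)"
  by (simp add: dop_prod_append dop_prod_Cons neg_mult_left neg_mult_right)

lemma op4_eq:
  fixes Q :: "nat \<Rightarrow> complex \<Rightarrow> 'k::field"
  assumes "admissible n Q" "2 \<le> n" "\<epsilon> = 1 \<or> \<epsilon> = -1"
  shows "dop_neg (rprod (2*n+2) (\<lambda>i. dop_minus
                   (dop_const (\<lambda>u. epsv n \<epsilon> i * xv n Q i (u + of_nat n + 1 - of_nat i))) dop_D))
    = BB n Q 0"
proof -
  define X where "X = (\<lambda>i. dop_minus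
                   (dop_const (\<lambda>u. epsv n \<epsilon> i * xv n Q i (u + of_nat n + 1 - of_nat i))) dop_D :: 'k dop)"
  define ZB where "ZB = (\<lambda>a. dop_minus (dop_const (\<lambda>u. zbar n Q a (u - of_nat n - 2 + of_nat a))) dop_D :: 'k dop)"
  define Z where "Z = (\<lambda>a. dop_minus (dop_const (\<lambda>u. zv n Q a (u + of_nat n + 1 - of_nat a))) dop_D :: 'k dop)"
  define M where "M = (dop_minus (dop_const (\<lambda>u. zbar n Q n (u - 1) * zv n Q n u)) (dop_mult dop_D dop_D) :: 'k dop)"
  have m1: "map X [1..<n+1] = map Z [1..<n+1]"
    by (rule map_cong) (auto simp: X_def Z_def xv_def epsv_def)
  have m3: "map X [n+3..<2*n+2+1] = rev (map ZB [1..<n+1])"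
    unfolding refl_map
  proof (rule arg_cong[where f=rev], rule map_cong)
    fix a assume "a \<in> set [1..<n+1]"
    then have a: "1 \<le> a" "a \<le> n" by auto
    then have "\<not> 2*n+3-a \<le> n" "2*n+3-a \<noteq> n+1" "2*n+3-a \<noteq> n+2" "2*n+3-(2*n+3-a) = a" by auto
    moreover have "u + of_nat n + 1 - of_nat (2*n+3-a) = u - of_nat n - 2 + of_nat a" for u :: complex
      using a by (simp add: of_nat_diff)
    ultimately show "X (2*n+3-a) = ZB a" by (simp add: X_def ZB_def xv_def epsv_def algebra_simps)
  qed simp
  have e2: "(of_int \<epsilon> :: 'k) * of_int \<epsilon> = 1" using eps_sq[OF assms(3)] .
  have ee: "of_int \<epsilon> * a * (of_int \<epsilon> * b) = a * b" for a b :: 'k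
    using e2 by (metis mult.assoc mult.left_commute mult_1)
  have mm': "xmid n Q u * xmid n Q (u - 1) = zbar n Q n (u - 1) * zv n Q n u" for u
    using mm[OF assms(1,2), of "u - 1"] by (simp add: mult.commute)
  have ar1: "u + of_nat n + 1 - of_nat (n+2) = u - 1" for u :: complex by simp
  have ar2: "u + 1 + of_nat n + 1 - of_nat (n+2) = u" for u :: complex by simp
  have ar3: "u + of_nat n + 1 - of_nat (n+1) = u" for u :: complex by simp
  have mid: "dop_neg (dop_mult (X (n+1)) (X (n+2))) = M"
    unfolding X_def M_def lin2 quad2
    apply (subst deg1_mult)
      apply simp
     apply simp
    apply (auto simp: dop_neg_def xv_def epsv_def ee mm' ar1 ar2 ar3 intro!: ext)
    done
  have "rprod (2*n+2) X = dop_prod (map X [1..<n+1] @ [X (n+1), X (n+2)] @ map X [n+3..<2*n+2+1])"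
    unfolding rprod_def upt_split by simp
  also have "\<dots> = dop_prod (map Z [1..<n+1] @ dop_mult (X (n+1)) (X (n+2)) # rev (map ZB [1..<n+1]))"
    unfolding prod_mid m1 m3 by simp
  finally have r: "rprod (2*n+2) X = dop_prod (map Z [1..<n+1] @ dop_mult (X (n+1)) (X (n+2)) # rev (map ZB [1..<n+1]))" .
  have "dop_neg (rprod (2*n+2) X) = dop_prod (map Z [1..<n+1] @ M # rev (map ZB [1..<n+1]))"
    unfolding r neg_mid mid ..
  also have "\<dots> = BB n Q 0"
    unfolding BB_def ZB_def M_def Z_def by simp
  finally show ?thesis unfolding X_def .
qed



definition rep :: "nat \<Rightarrow> ((nat \<Rightarrow> complex \<Rightarrow> 'k::field) \<Rightarrow> 'k dop) \<Rightarrow> bool" where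
  "rep n F = (\<exists>E. \<forall>j u Q. admissible n Q \<longrightarrow> F Q j u = yeval n Q (E j u))"

fun ysum :: "yexpr list \<Rightarrow> yexpr" where
  "ysum [] = YConst 0"
| "ysum (e # es) = YAdd e (ysum es)"

lemma yeval_ysum: "yeval n Q (ysum es) = sum_list (map (yeval n Q) es)"
  by (induction es) auto

lemma rep_mult:
  assumes "rep n F" "rep n G"
  shows "rep n (\<lambda>Q. dop_mult (F Q) (G Q))"
proof -
  obtain EF where EF: "\<And>j u Q. admissible n Q \<Longrightarrow> F Q j u = yeval n Q (EF j u)"
    using assms(1) unfolding rep_def by blast
  obtain EG where EG: "\<And>j u Q. admissible n Q \<Longrightarrow> G Q j u = yeval n Q (EG j u)"
    using assms(2) unfolding rep_def by blast
  define E where "E = (\<lambda>m u. ysum (map (\<lambda>i. YMul (EF i u) (EG (m - i) (u + of_nat i))) [0..<Suc m]))"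
  have "dop_mult (F Q) (G Q) m u = yeval n Q (E m u)" if "admissible n Q" for m u Q
  proof -
    have "dop_mult (F Q) (G Q) m u = (\<Sum>i\<in>set [0..<Suc m]. F Q i u * G Q (m - i) (u + of_nat i))"
      unfolding dop_mult_def by (intro sum.cong) auto
    also have "\<dots> = sum_list (map (\<lambda>i. F Q i u * G Q (m - i) (u + of_nat i)) [0..<Suc m])"
      by (rule sum_set_upt_conv_sum_list_nat)
    also have "\<dots> = yeval n Q (E m u)"
      unfolding E_def yeval_ysum map_map o_def using that by (simp add: EF EG)
    finally show ?thesis .
  qed
  then show ?thesis unfolding rep_def by blast
qed

lemma rep_const:
  assumes "\<And>u. \<exists>e. \<forall>Q. admissible n Q \<longrightarrow> c Q u = yeval n Q e"
  shows "rep n (\<lambda>Q. dop_const (c Q))"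
proof -
  obtain e where e: "\<And>u Q. admissible n Q \<Longrightarrow> c Q u = yeval n Q (e u)"
    using assms by metis
  show ?thesis unfolding rep_def dop_const_def
    by (rule exI[where x="\<lambda>j u. if j = 0 then e u else YConst 0"]) (simp add: e)
qed

lemma rep_D: "rep n (\<lambda>Q. dop_D)"
  unfolding rep_def dop_D_def
  by (rule exI[where x="\<lambda>j u. if j = 1 then YConst 1 else YConst 0"]) simp

lemma rep_one: "rep n (\<lambda>Q. dop_one)"
  unfolding rep_def dop_one_def dop_const_def
  by (rule exI[where x="\<lambda>j u. if j = 0 then YConst 1 else YConst 0"]) simp

lemma rep_minus:
  assumes "rep n F" "rep n G"
  shows "rep n (\<lambda>Q. dop_minus (F Q) (G Q))"
proof -
  obtain EF where EF: "\<And>j u Q. admissible n Q \<Longrightarrow> F Q j u = yeval n Q (EF j u)"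
    using assms(1) unfolding rep_def by blast
  obtain EG where EG: "\<And>j u Q. admissible n Q \<Longrightarrow> G Q j u = yeval n Q (EG j u)"
    using assms(2) unfolding rep_def by blast
  show ?thesis unfolding rep_def dop_minus_def
    by (rule exI[where x="\<lambda>j u. YAdd (EF j u) (YMul (YConst (-1)) (EG j u))"]) (simp add: EF EG)
qed

lemma rep_neg:
  assumes "rep n F"
  shows "rep n (\<lambda>Q. dop_neg (F Q))"
proof -
  obtain EF where EF: "\<And>j u Q. admissible n Q \<Longrightarrow> F Q j u = yeval n Q (EF j u)"
    using assms(1) unfolding rep_def by blast
  show ?thesis unfolding rep_def dop_neg_def
    by (rule exI[where x="\<lambda>j u. YMul (YConst (-1)) (EF j u)"]) (simp add: EF)
qed

lemma rep_prod:
  assumes "\<forall>a\<in>set l. rep n (\<lambda>Q. F Q a)"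
  shows "rep n (\<lambda>Q. dop_prod (map (F Q) l))"
  using assms
proof (induction l)
  case Nil
  then show ?case by (simp add: dop_prod_Nil rep_one)
next
  case (Cons a l)
  then show ?case by (simp add: dop_prod_Cons rep_mult)
qed

lemma Yv_y: "a \<le> n \<Longrightarrow> Yv n Q a v = yeval n Q (YAtom a v)"
  by (auto simp: Yv_def)
lemma Yvi_y: "a \<le> n \<Longrightarrow> inverse (Yv n Q a v) = yeval n Q (YInv a v)"
  by (auto simp: Yv_def)

lemma zv_y:
  assumes "a \<le> n" shows "\<exists>e. \<forall>Q. zv n Q a v = yeval n Q e"
proof (intro exI allI)
  fix Q :: "nat \<Rightarrow> complex \<Rightarrow> 'k::field"
  have b: "a - 1 \<le> n" using assms by simp
  show "zv n Q a v = yeval n Q (YMul (YAtom a (v + of_nat a / 2)) (YInv (a - 1) (v + (of_nat a + 1) / 2)))"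
    unfolding yeval.simps(5) Yv_y[OF assms, symmetric] Yvi_y[OF b, symmetric] zv_def divide_inverse ..
qed

lemma zbar_y:
  assumes "a \<le> n" shows "\<exists>e. \<forall>Q. zbar n Q a v = yeval n Q e"
proof (intro exI allI)
  fix Q :: "nat \<Rightarrow> complex \<Rightarrow> 'k::field"
  have b: "a - 1 \<le> n" using assms by simp
  show "zbar n Q a v = yeval n Q (YMul (YAtom (a - 1) (v + (2 * of_nat n - of_nat a + 3) / 2)) (YInv a (v + (2 * of_nat n - of_nat a + 4) / 2)))"
    unfolding yeval.simps(5) Yv_y[OF b, symmetric] Yvi_y[OF assms, symmetric] zbar_def divide_inverse ..
qed

lemma rep_BB: "rep n (\<lambda>Q::nat \<Rightarrow> complex \<Rightarrow> 'k::field. BB n Q 0)"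
proof -
  have z2: "rep n (\<lambda>Q::nat \<Rightarrow> complex \<Rightarrow> 'k. dop_minus (dop_const (\<lambda>u. zv n Q a (u + of_nat n + 1 - of_nat a))) dop_D)"
    if "a \<in> set [Suc 0..<Suc n]" for a
    using that by (intro rep_minus rep_const rep_D) (metis zv_y atLeastLessThan_iff less_Suc_eq_le set_upt)
  have zb2: "rep n (\<lambda>Q::nat \<Rightarrow> complex \<Rightarrow> 'k. dop_minus (dop_const (\<lambda>u. zbar n Q a (u - of_nat n - 2 + of_nat a))) dop_D)"
    if "a \<in> set [Suc 0..<Suc n]" for a
    using that by (intro rep_minus rep_const rep_D) (metis zbar_y atLeastLessThan_iff less_Suc_eq_le set_upt)
  have m: "rep n (\<lambda>Q::nat \<Rightarrow> complex \<Rightarrow> 'k. dop_minus (dop_const (\<lambda>u. zbar n Q n (u - 1) * zv n Q n u)) (dop_mult dop_D dop_D))"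
  proof (intro rep_minus rep_const rep_mult rep_D)
    fix u
    obtain e1 where "\<forall>Q::nat \<Rightarrow> complex \<Rightarrow> 'k. zbar n Q n (u - 1) = yeval n Q e1" using zbar_y by blast
    moreover obtain e2 where "\<forall>Q::nat \<Rightarrow> complex \<Rightarrow> 'k. zv n Q n u = yeval n Q e2" using zv_y by blast
    ultimately show "\<exists>e. \<forall>Q::nat \<Rightarrow> complex \<Rightarrow> 'k. admissible n Q \<longrightarrow> zbar n Q n (u - 1) * zv n Q n u = yeval n Q e"
      by (intro exI[where x="YMul e1 e2"]) auto
  qed
  show ?thesis unfolding BB_def dop_prod_append dop_prod_Cons rev_map
    by (intro rep_mult m rep_prod ballI z2 zb2) auto
qed



lemma mult_deg:
  assumes A: "\<And>j u. j > p \<Longrightarrow> A j u = 0" and B: "\<And>j u. j > q \<Longrightarrow> B j u = 0"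
  shows "\<And>j u. j > p + q \<Longrightarrow> dop_mult A B j u = 0"
    and "dop_mult A B (p + q) u = A p u * B q (u + of_nat p)"
proof -
  fix j u assume j: "j > p + q"
  have "dop_mult A B j u = (\<Sum>i\<le>j. 0)"
    unfolding dop_mult_def
  proof (intro sum.cong refl)
    fix i assume "i \<in> {..j}"
    show "A i u * B (j - i) (u + of_nat i) = 0"
      using j A B by (cases "i > p") auto
  qed
  then show "dop_mult A B j u = 0" by simp
next
  have "dop_mult A B (p + q) u = (\<Sum>i\<le>p+q. if i = p then A p u * B q (u + of_nat p) else 0)"
    unfolding dop_mult_def
  proof (intro sum.cong refl)
    fix i assume "i \<in> {..p+q}"
    show "A i u * B (p + q - i) (u + of_nat i) = (if i = p then A p u * B q (u + of_nat p) else 0)"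
      using A B by (cases "i > p"; cases "i = p") auto
  qed
  then show "dop_mult A B (p + q) u = A p u * B q (u + of_nat p)" by simp
qed

lemma prod_deg:
  assumes "\<forall>x\<in>set xs. (\<forall>j u. j > 1 \<longrightarrow> x j u = 0) \<and> (\<forall>u. x 1 u = -1)"
  shows "(\<forall>j u. j > length xs \<longrightarrow> dop_prod xs j u = 0) \<and> (\<forall>u. dop_prod xs (length xs) u = ((-1) ^ length xs :: 'k::field))"
  using assms
proof (induction xs)
  case Nil
  then show ?case by (simp add: dop_prod_Nil dop_one_def dop_const_def)
next
  case (Cons x xs)
  then have h1: "\<And>j u. j > 1 \<Longrightarrow> x j u = 0" and h2: "\<And>u. x 1 u = -1"
    and ih1: "\<And>j u. j > length xs \<Longrightarrow> dop_prod xs j u = 0"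
    and ih2: "\<And>u. dop_prod xs (length xs) u = (-1) ^ length xs" by auto
  note md = mult_deg[of 1 x "length xs" "dop_prod xs", OF h1 ih1]
  show ?case
    using md h2 ih2 by (simp add: dop_prod_Cons)
qed

lemma Lop_deg:
  fixes Q :: "nat \<Rightarrow> complex \<Rightarrow> 'k::field"
  shows "(\<forall>j > 2 * n + 2. Lop n Q j = (\<lambda>_. 0)) \<and> Lop n Q (2 * n + 2) \<noteq> (\<lambda>_. 0)"
proof -
  let ?xs = "map (\<lambda>i. dop_minus (dop_const (\<lambda>u. xv n Q i (u + of_nat n + 1 - of_nat i))) dop_D) [1..<2*n+2+1]"
  have "\<forall>x\<in>set ?xs. (\<forall>j u. j > 1 \<longrightarrow> x j u = 0) \<and> (\<forall>u. x 1 u = -1)"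
    by (auto simp: lin2)
  from prod_deg[OF this] have
    a: "\<forall>j u. j > 2*n+2 \<longrightarrow> Lop n Q j u = 0" and b: "\<forall>u. Lop n Q (2*n+2) u = (-1) ^ (2*n+2)"
    unfolding Lop_def rprod_def by (simp_all del: upt_Suc)
  have "Lop n Q (2*n+2) 0 \<noteq> 0" using b by simp
  then show ?thesis using a by auto
qed


theorem mainTheorem1:
  fixes n :: nat and \<epsilon> :: int
  assumes "n \<ge> 2" and "\<epsilon> = 1 \<or> \<epsilon> = -1"
  shows
   "(\<forall>Q :: nat \<Rightarrow> complex \<Rightarrow> 'k::field. admissible n Q \<longrightarrow>
      (let N = 2 * n + 2;
           op1 = dop_mult
                   (dop_mult
                     (rprod n (\<lambda>a. dop_minus dop_one (dop_mult (dop_const (\<lambda>u. zbar n Q a u)) dop_D)))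
                     (dop_minus dop_one
                        (dop_mult (dop_const (\<lambda>u. zbar n Q n u * zv n Q n (u + 1)))
                                  (dop_mult dop_D dop_D))))
                   (lprod n (\<lambda>a. dop_minus dop_one (dop_mult (dop_const (\<lambda>u. zv n Q a u)) dop_D)));
           op2 = dop_mult
                   (dop_mult
                     (rprod n (\<lambda>a. dop_minus (dop_const (\<lambda>u. zv n Q a (u + of_nat n + 1 - of_nat a))) dop_D))
                     (dop_minus (dop_const (\<lambda>u. zbar n Q n (u - 1) * zv n Q n u))
                                (dop_mult dop_D dop_D)))
                   (lprod n (\<lambda>a. dop_minus (dop_const (\<lambda>u. zbar n Q a (u - of_nat n - 2 + of_nat a))) dop_D));
           op3 = lprod N (\<lambda>i. dop_minus dop_one
                   (dop_mult (dop_const (\<lambda>u. epsv n \<epsilon> i * xv n Q i u)) dop_D));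
           op4 = dop_neg (rprod N (\<lambda>i. dop_minus
                   (dop_const (\<lambda>u. epsv n \<epsilon> i * xv n Q i (u + of_nat n + 1 - of_nat i))) dop_D))
       in op1 = op2 \<and> op2 = op3 \<and> op3 = op4))
   \<and> (\<forall>Q :: nat \<Rightarrow> complex \<Rightarrow> 'k. admissible n Q \<longrightarrow>
        (\<forall>j > 2 * n + 2. Lop n Q j = (\<lambda>_. 0)) \<and> Lop n Q (2 * n + 2) \<noteq> (\<lambda>_. 0))
   \<and> (\<forall>j u. \<exists>e. \<forall>Q :: nat \<Rightarrow> complex \<Rightarrow> 'k. admissible n Q \<longrightarrow> Lop n Q j u = yeval n Q e)"
proof -
  have P1: "let N = 2 * n + 2;
           op1 = dop_mult
                   (dop_mult
                     (rprod n (\<lambda>a. dop_minus dop_one (dop_mult (dop_const (\<lambda>u. zbar n Q a u)) dop_D)))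
                     (dop_minus dop_one
                        (dop_mult (dop_const (\<lambda>u. zbar n Q n u * zv n Q n (u + 1)))
                                  (dop_mult dop_D dop_D))))
                   (lprod n (\<lambda>a. dop_minus dop_one (dop_mult (dop_const (\<lambda>u. zv n Q a u)) dop_D)));
           op2 = dop_mult
                   (dop_mult
                     (rprod n (\<lambda>a. dop_minus (dop_const (\<lambda>u. zv n Q a (u + of_nat n + 1 - of_nat a))) dop_D))
                     (dop_minus (dop_const (\<lambda>u. zbar n Q n (u - 1) * zv n Q n u))
                                (dop_mult dop_D dop_D)))
                   (lprod n (\<lambda>a. dop_minus (dop_const (\<lambda>u. zbar n Q a (u - of_nat n - 2 + of_nat a))) dop_D));
           op3 = lprod N (\<lambda>i. dop_minus dop_one
                   (dop_mult (dop_const (\<lambda>u. epsv n \<epsilon> i * xv n Q i u)) dop_D));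
           op4 = dop_neg (rprod N (\<lambda>i. dop_minus
                   (dop_const (\<lambda>u. epsv n \<epsilon> i * xv n Q i (u + of_nat n + 1 - of_nat i))) dop_D))
       in op1 = op2 \<and> op2 = op3 \<and> op3 = op4"
    if adm: "admissible n Q" for Q :: "nat \<Rightarrow> complex \<Rightarrow> 'k::field"
  proof -
    have n1: "1 \<le> n" using assms(1) by simp
    have F0: "Ff n Q 0 = dop_one" by (simp add: Ff_def Yv_def dop_one_def)
    have G0: "Gf n Q 0 = dop_one" by (simp add: Gf_def Yv_def dop_one_def)
    have ab: "AA n Q 0 = BB n Q 0" using AB[OF adm n1, of 0] by (simp add: F0 G0)
    have o3: "lprod (2*n+2) (\<lambda>i. dop_minus dop_one (dop_mult (dop_const (\<lambda>u. epsv n \<epsilon> i * xv n Q i u)) dop_D))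
       = AA n Q 0" by (rule op3_eq[OF adm assms(1,2)])
    have o4: "dop_neg (rprod (2*n+2) (\<lambda>i. dop_minus
                   (dop_const (\<lambda>u. epsv n \<epsilon> i * xv n Q i (u + of_nat n + 1 - of_nat i))) dop_D)) = BB n Q 0"
      by (rule op4_eq[OF adm assms(1,2)])
    have o1: "dop_mult
                   (dop_mult
                     (rprod n (\<lambda>a. dop_minus dop_one (dop_mult (dop_const (\<lambda>u. zbar n Q a u)) dop_D)))
                     (dop_minus dop_one
                        (dop_mult (dop_const (\<lambda>u. zbar n Q n u * zv n Q n (u + 1)))
                                  (dop_mult dop_D dop_D))))
                   (lprod n (\<lambda>a. dop_minus dop_one (dop_mult (dop_const (\<lambda>u. zv n Q a u)) dop_D))) = AA n Q 0"
      unfolding AA_def rprod_def lprod_def by (simp add: dop_prod_append dop_prod_Cons dop_mult_assoc)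
    have o2: "dop_mult
                   (dop_mult
                     (rprod n (\<lambda>a. dop_minus (dop_const (\<lambda>u. zv n Q a (u + of_nat n + 1 - of_nat a))) dop_D))
                     (dop_minus (dop_const (\<lambda>u. zbar n Q n (u - 1) * zv n Q n u))
                                (dop_mult dop_D dop_D)))
                   (lprod n (\<lambda>a. dop_minus (dop_const (\<lambda>u. zbar n Q a (u - of_nat n - 2 + of_nat a))) dop_D)) = BB n Q 0"
      unfolding BB_def rprod_def lprod_def by (simp add: dop_prod_append dop_prod_Cons dop_mult_assoc)
    show ?thesis unfolding Let_def o1 o2 o3 o4 ab by simp
  qed
  have P3: "\<exists>e. \<forall>Q :: nat \<Rightarrow> complex \<Rightarrow> 'k. admissible n Q \<longrightarrow> Lop n Q j u = yeval n Q e" for j u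
  proof -
    obtain E where E: "\<And>j u (Q :: nat \<Rightarrow> complex \<Rightarrow> 'k). admissible n Q \<Longrightarrow> dop_neg (BB n Q 0) j u = yeval n Q (E j u)"
      using rep_neg[OF rep_BB[where 'k='k and n=n]] unfolding rep_def by blast
    have "Lop n Q = dop_neg (BB n Q 0)" if adm: "admissible n Q" for Q :: "nat \<Rightarrow> complex \<Rightarrow> 'k"
    proof -
      have e1: "epsv n (1::int) i = (1::'k)" for i by (simp add: epsv_def)
      have "dop_neg (Lop n Q) = BB n Q 0"
        using op4_eq[OF adm assms(1), of 1] unfolding Lop_def e1 by simp
      then show ?thesis by (metis neg_neg)
    qed
    then show ?thesis using E by metis
  qed
  show ?thesis using P1 Lop_deg P3 by blast
qed

end
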